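(* Fix $t\in[T]$ and suppose $\|\theta^*\|_2\le L_\theta$ and $\|\widehat\theta_t-\theta^*\|_{\Sigma_t}\le\beta_t$. Let $p^*_{s,a,s'}=p(s'\mid s,a,\theta^* )$. Then $p^*\in\mathcal P'_t$, the set of $p\in[0,1]^{\mathcal S\times\mathcal A\times\mathcal S}$ such that for all $(s,a)$: $\sum_{s'\in\mathcal S_{s,a}}p_{s,a,s'}=1$ and $\sum_{s'\in\mathcal S_{s,a}}|p_{s,a,s'}-p(s'\mid s,a,\widehat\theta_t)|\le R_{t,s,a}$, where $R_{t,s,a}=2\beta_t\max_{s'\in\mathcal S_{s,a}}\|\varphi(s,a,s')\|_{\Sigma_t^{-1}}$.
   Context: MNL model: finite $\mathcal S,\mathcal A$; known reachable sets $\mathcal S_{s,a}$ and features $\varphi(s,a,s')\in\mathbb R^d$; $p(s'\mid s,a,\theta)=\exp(\varphi(s,a,s')^\top\theta)/\sum_{s''\in\mathcal S_{s,a}}\exp(\varphi(s,a,s'')^\top\theta)$ for $s'\in\mathcal S_{s,a}$; $\theta^*$ the true parameter. $\widehat\theta_t$ and the positive definite $\Sigma_t=\lambda I_d+\sum_{i<t}\nabla^2\ell_i(\widehat\theta_{i+1})$ are the online estimator's iterates; $\beta_t>0$ is the confidence radius. $\|x\|_A=\sqrt{x^\top Ax}$. *)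

theory Defs
  imports "HOL-Analysis.Analysis"
begin

text \<open>MNL transition model. \<open>Ssa s a\<close> is the reachable set \<open>S_{s,a}\<close>; outside it the
  probability is 0.\<close>
definition mnl_prob ::
  "('s \<Rightarrow> 'a \<Rightarrow> 's set) \<Rightarrow> ('s \<Rightarrow> 'a \<Rightarrow> 's \<Rightarrow> real^'d) \<Rightarrow> real^'d \<Rightarrow> 's \<Rightarrow> 'a \<Rightarrow> 's \<Rightarrow> real"
  where "mnl_prob Ssa phi theta s a s' =
    (if s' \<in> Ssa s a
     then exp (phi s a s' \<bullet> theta) / (\<Sum>s''\<in>Ssa s a. exp (phi s a s'' \<bullet> theta))
     else 0)"

definition wnorm :: "real^'d \<Rightarrow> real^'d^'d \<Rightarrow> real"
  where "wnorm x A = sqrt (x \<bullet> (A *v x))"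

definition pos_def_mat :: "real^'d^'d \<Rightarrow> bool"
  where "pos_def_mat A \<longleftrightarrow> transpose A = A \<and> (\<forall>x. x \<noteq> 0 \<longrightarrow> x \<bullet> (A *v x) > 0)"

definition conf_radius ::
  "('s \<Rightarrow> 'a \<Rightarrow> 's set) \<Rightarrow> ('s \<Rightarrow> 'a \<Rightarrow> 's \<Rightarrow> real^'d) \<Rightarrow> real^'d^'d \<Rightarrow> real \<Rightarrow> 's \<Rightarrow> 'a \<Rightarrow> real"
  where "conf_radius Ssa phi Sig beta s a =
    2 * beta * Max ((\<lambda>s'. wnorm (phi s a s') (matrix_inv Sig)) ` Ssa s a)"

definition conf_set ::
  "('s \<Rightarrow> 'a \<Rightarrow> 's set) \<Rightarrow> ('s \<Rightarrow> 'a \<Rightarrow> 's \<Rightarrow> real^'d) \<Rightarrow> real^'d \<Rightarrow> real^'d^'d \<Rightarrow> real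
     \<Rightarrow> ('s \<Rightarrow> 'a \<Rightarrow> 's \<Rightarrow> real) set"
  where "conf_set Ssa phi theta_hat Sig beta =
    {p. (\<forall>s a s'. 0 \<le> p s a s' \<and> p s a s' \<le> 1) \<and>
        (\<forall>s a. (\<Sum>s'\<in>Ssa s a. p s a s') = 1 \<and>
               (\<Sum>s'\<in>Ssa s a. \<bar>p s a s' - mnl_prob Ssa phi theta_hat s a s'\<bar>)
                 \<le> conf_radius Ssa phi Sig beta s a)}"

end

theory Submission
  imports Defs
begin

lemma alg1:
  fixes Ua Ub Va Vb E :: real
  assumes "0 \<le> Ua" "0 \<le> Ub" "0 \<le> Va" "0 \<le> Vb" "0 < Ua + Ub" "0 < Va + Vb" "1 \<le> E"
    "Ua \<le> E * Va" "Vb \<le> E * Ub"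
  shows "Ua/(Ua+Ub) - Va/(Va+Vb) \<le> (E^2-1)/(4*E)"
proof -
  have e1: "1 \<le> E^2" using assms by (simp add: one_le_power)
  have "Va \<le> E^2*Va" using mult_right_mono[OF e1, of Va] assms by simp
  hence p: "0 < E^2*Va + Vb" using assms by linarith
  have "Ua * Vb \<le> (E*Va) * (E*Ub)" using assms by (intro mult_mono) auto
  hence "Ua * (E^2*Va + Vb) \<le> E^2*Va*(Ua+Ub)" by (simp add: algebra_simps power2_eq_square)
  hence 1: "Ua/(Ua+Ub) \<le> E^2*Va/(E^2*Va + Vb)" using p assms by (simp add: divide_simps mult.commute)
  have sq: "0 \<le> (E*Va - Vb)^2 + (E-1)^2*Va*Vb" using assms by simp
  have "4*E*(Va*Vb) \<le> (E^2*Va + Vb)*(Va+Vb)" using sq by (simp add: algebra_simps power2_eq_square)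
  hence "(E^2-1)*(4*E*(Va*Vb)) \<le> (E^2-1)*((E^2*Va + Vb)*(Va+Vb))"
    using assms by (intro mult_left_mono) (auto simp: one_le_power)
  hence ineq: "(E^2-1)*(Va*Vb)*(4*E) \<le> (E^2-1)*((E^2*Va + Vb)*(Va+Vb))" by (simp add: ac_simps)
  have D2: "0 < Va + Vb" using assms by simp
  have eq: "E^2*Va/(E^2*Va + Vb) - Va/(Va+Vb) = (E^2-1)*(Va*Vb)/((E^2*Va + Vb)*(Va+Vb))"
    using p D2 by (simp add: field_simps)
  have E0: "0 < 4*E" using assms by simp
  have DD: "0 < (E^2*Va + Vb)*(Va+Vb)" using p D2 by simp
  have "(E^2-1)*(Va*Vb)/((E^2*Va + Vb)*(Va+Vb)) \<le> (E^2-1)/(4*E)"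
    using ineq E0 DD by (simp add: frac_le_eq divide_le_eq le_divide_eq pos_divide_le_eq pos_le_divide_eq)
  hence "E^2*Va/(E^2*Va + Vb) - Va/(Va+Vb) \<le> (E^2-1)/(4*E)" using eq by simp
  thus ?thesis using 1 by linarith
qed

lemma exp_fact: fixes M :: real assumes "0 \<le> M" "M < 1"
  shows "(exp M ^2 - 1)/(4 * exp M) \<le> M"
proof -
  have a: "exp M \<le> 1 + M + M^2" using exp_bound assms by auto
  have b: "1 - M \<le> exp (-M)" using exp_ge_add_one_self[of "-M"] by simp
  have "M^2 \<le> M" using assms by (simp add: power2_eq_square mult_left_le_one_le)
  hence "exp M - exp (-M) \<le> 4*M" using a b assms by linarith
  moreover have "exp (-M) = 1/exp M" by (simp add: exp_minus field_simps)
  ultimately have "exp M - 1/exp M \<le> 4*M" by simp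
  hence "exp M ^2 - 1 \<le> 4*M*exp M" by (simp add: field_simps power2_eq_square)
  thus ?thesis by (simp add: divide_simps mult.commute mult.left_commute)
qed

lemma softmax_l1:
  fixes u v :: "'i \<Rightarrow> real" and S :: "'i set"
  assumes fin: "finite S" and ne: "S \<noteq> {}" and M0: "0 \<le> M"
    and close: "\<And>i. i \<in> S \<Longrightarrow> \<bar>u i - v i\<bar> \<le> M"
  shows "(\<Sum>i\<in>S. \<bar>exp (u i) / (\<Sum>j\<in>S. exp (u j)) - exp (v i) / (\<Sum>j\<in>S. exp (v j))\<bar>) \<le> 2*M"
proof -
  define Zu where "Zu = (\<Sum>j\<in>S. exp (u j))"
  define Zv where "Zv = (\<Sum>j\<in>S. exp (v j))"
  define p where "p i = exp (u i) / Zu" for i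
  define q where "q i = exp (v i) / Zv" for i
  have Zu0: "Zu > 0" unfolding Zu_def using fin ne by (intro sum_pos) auto
  have Zv0: "Zv > 0" unfolding Zv_def using fin ne by (intro sum_pos) auto
  have sp: "(\<Sum>i\<in>S. p i) = 1" unfolding p_def using Zu0 by (simp add: sum_divide_distrib[symmetric] Zu_def)
  have sq: "(\<Sum>i\<in>S. q i) = 1" unfolding q_def using Zv0 by (simp add: sum_divide_distrib[symmetric] Zv_def)
  have goal: "(\<Sum>i\<in>S. \<bar>p i - q i\<bar>) \<le> 2*M"
  proof (cases "M \<ge> 1")
    case True
    have "(\<Sum>i\<in>S. \<bar>p i - q i\<bar>) \<le> (\<Sum>i\<in>S. p i + q i)"
    proof (intro sum_mono)
      fix i assume "i \<in> S"
      have "0 \<le> p i" "0 \<le> q i" using Zu0 Zv0 by (auto simp: p_def q_def)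
      thus "\<bar>p i - q i\<bar> \<le> p i + q i" by (simp add: abs_le_iff)
    qed
    also have "\<dots> = 2" using sp sq by (simp add: sum.distrib)
    finally show ?thesis using True by linarith
  next
    case False
    define A where "A = {i\<in>S. q i \<le> p i}"
    have AS: "A \<subseteq> S" and finA: "finite A" and finB: "finite (S - A)" using fin by (auto simp: A_def)
    have split: "(\<Sum>i\<in>S. f i) = (\<Sum>i\<in>A. f i) + (\<Sum>i\<in>S-A. f i)" for f :: "'i \<Rightarrow> real"
      using sum.subset_diff[OF AS fin] by (simp add: add.commute)
    have "(\<Sum>i\<in>S. \<bar>p i - q i\<bar>) = (\<Sum>i\<in>A. p i - q i) + (\<Sum>i\<in>S-A. q i - p i)"
      using split[of "\<lambda>i. \<bar>p i - q i\<bar>"]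
      by (simp add: A_def; intro sum.cong) auto
    also have "(\<Sum>i\<in>S-A. q i - p i) = (\<Sum>i\<in>A. p i - q i)"
      using split[of p] split[of q] sp sq by (simp add: sum_subtractf)
    finally have eq: "(\<Sum>i\<in>S. \<bar>p i - q i\<bar>) = 2 * (\<Sum>i\<in>A. p i - q i)" by simp
    define Ua where "Ua = (\<Sum>i\<in>A. exp (u i))"
    define Ub where "Ub = (\<Sum>i\<in>S-A. exp (u i))"
    define Va where "Va = (\<Sum>i\<in>A. exp (v i))"
    define Vb where "Vb = (\<Sum>i\<in>S-A. exp (v i))"
    have ZU: "Zu = Ua + Ub" unfolding Zu_def Ua_def Ub_def by (rule split)
    have ZV: "Zv = Va + Vb" unfolding Zv_def Va_def Vb_def by (rule split)
    have "(\<Sum>i\<in>A. p i - q i) = Ua/(Ua+Ub) - Va/(Va+Vb)"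
      unfolding p_def q_def sum_subtractf sum_divide_distrib[symmetric]
      by (simp add: Ua_def Va_def ZU ZV)
    also have "\<dots> \<le> (exp M ^2 - 1)/(4 * exp M)"
    proof (rule alg1)
      show "0 \<le> Ua" "0 \<le> Ub" "0 \<le> Va" "0 \<le> Vb" unfolding Ua_def Ub_def Va_def Vb_def
        by (auto intro: sum_nonneg)
      show "0 < Ua + Ub" "0 < Va + Vb" using ZU ZV Zu0 Zv0 by auto
      show "1 \<le> exp M" using M0 by simp
      have "exp (u i) \<le> exp M * exp (v i)" if "i \<in> S" for i
        using close[OF that] by (simp add: exp_add[symmetric])
      thus "Ua \<le> exp M * Va" unfolding Ua_def Va_def sum_distrib_left using AS
        by (intro sum_mono) auto
      have "exp (v i) \<le> exp M * exp (u i)" if "i \<in> S" for i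
        using close[OF that] by (simp add: exp_add[symmetric])
      thus "Vb \<le> exp M * Ub" unfolding Ub_def Vb_def sum_distrib_left
        by (intro sum_mono) auto
    qed
    also have "\<dots> \<le> M" using exp_fact M0 False by simp
    finally show ?thesis using eq by linarith
  qed
  thus ?thesis unfolding p_def q_def Zu_def Zv_def .
qed

lemma sym_form:
  fixes S :: "real^'d^'d"
  assumes "transpose S = S"
  shows "x \<bullet> (S *v y) = y \<bullet> (S *v x)"
proof -
  have "x \<bullet> (S *v y) = (x v* S) \<bullet> y" by (simp add: dot_lmul_matrix)
  also have "x v* S = transpose S *v x" by simp
  finally show ?thesis using assms by (simp add: inner_commute)
qed

lemma cs_form:
  fixes S :: "real^'d^'d"
  assumes pd: "pos_def_mat S"
  shows "(w \<bullet> (S *v h))^2 \<le> (w \<bullet> (S *v w)) * (h \<bullet> (S *v h))"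
proof (cases "h = 0")
  case True thus ?thesis by simp
next
  case False
  have sym: "transpose S = S" and pos: "\<And>x. x \<noteq> 0 \<Longrightarrow> x \<bullet> (S *v x) > 0"
    using pd by (auto simp: pos_def_mat_def)
  have nn: "0 \<le> x \<bullet> (S *v x)" for x using pos[of x] by (cases "x = 0") auto
  define a where "a = w \<bullet> (S *v w)"
  define b where "b = w \<bullet> (S *v h)"
  define c where "c = h \<bullet> (S *v h)"
  have c0: "c > 0" using pos[OF False] by (simp add: c_def)
  have hw: "h \<bullet> (S *v w) = b" unfolding b_def using sym_form[OF sym] by metis
  define r where "r = b / c"
  have "0 \<le> (w - r *\<^sub>R h) \<bullet> (S *v (w - r *\<^sub>R h))" by (rule nn)
  also have "\<dots> = a - 2*r*b + r^2 * c"
    using hw by (simp add: algebra_simps inner_diff_left inner_diff_right a_def c_def b_def power2_eq_square)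
  also have "\<dots> = a - b^2/c" using c0 by (simp add: r_def field_simps power2_eq_square)
  finally have "b^2 / c \<le> a" by simp
  hence "b^2 \<le> a * c" using c0 by (simp add: divide_simps)
  thus ?thesis by (simp add: a_def b_def c_def)
qed

lemma cs_wnorm:
  fixes S :: "real^'d^'d"
  assumes pd: "pos_def_mat S"
  shows "\<bar>phi \<bullet> h\<bar> \<le> wnorm phi (matrix_inv S) * wnorm h S"
proof -
  have sym: "transpose S = S" and pos: "\<And>x. x \<noteq> 0 \<Longrightarrow> x \<bullet> (S *v x) > 0"
    using pd by (auto simp: pos_def_mat_def)
  have nn: "0 \<le> x \<bullet> (S *v x)" for x using pos[of x] by (cases "x = 0") auto
  have "\<forall>x. S *v x = 0 \<longrightarrow> x = 0" using pos by fastforce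
  hence "invertible S" unfolding invertible_left_inverse matrix_left_invertible_ker[symmetric] .
  hence inv: "S ** matrix_inv S = mat 1 \<and> matrix_inv S ** S = mat 1"
    unfolding invertible_def matrix_inv_def by (rule someI_ex)
  define w where "w = matrix_inv S *v phi"
  have Sw: "S *v w = phi" unfolding w_def matrix_vector_mul_assoc using inv by simp
  have 1: "phi \<bullet> h = w \<bullet> (S *v h)"
    using sym_form[OF sym, of w h] Sw by (simp add: inner_commute)
  have 2: "phi \<bullet> (matrix_inv S *v phi) = w \<bullet> (S *v w)"
    using Sw w_def by (simp add: inner_commute)
  have "\<bar>phi \<bullet> h\<bar> = sqrt ((w \<bullet> (S *v h))^2)" using 1 by simp
  also have "\<dots> \<le> sqrt ((w \<bullet> (S *v w)) * (h \<bullet> (S *v h)))"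
    using cs_form[OF pd] by (rule real_sqrt_le_mono)
  also have "\<dots> = wnorm phi (matrix_inv S) * wnorm h S"
    unfolding wnorm_def 2 by (simp add: real_sqrt_mult)
  finally show ?thesis .
qed


lemma wnorm_inv_nonneg:
  fixes S :: "real^'d^'d"
  assumes pd: "pos_def_mat S"
  shows "0 \<le> wnorm phi (matrix_inv S)"
proof -
  have sym: "transpose S = S" and pos: "\<And>x. x \<noteq> 0 \<Longrightarrow> x \<bullet> (S *v x) > 0"
    using pd by (auto simp: pos_def_mat_def)
  have nn: "0 \<le> x \<bullet> (S *v x)" for x using pos[of x] by (cases "x = 0") auto
  have "\<forall>x. S *v x = 0 \<longrightarrow> x = 0" using pos by fastforce
  hence "invertible S" unfolding invertible_left_inverse matrix_left_invertible_ker[symmetric] .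
  hence inv: "S ** matrix_inv S = mat 1 \<and> matrix_inv S ** S = mat 1"
    unfolding invertible_def matrix_inv_def by (rule someI_ex)
  define w where "w = matrix_inv S *v phi"
  have Sw: "S *v w = phi" unfolding w_def matrix_vector_mul_assoc using inv by simp
  have 2: "phi \<bullet> (matrix_inv S *v phi) = w \<bullet> (S *v w)"
    using Sw w_def by (simp add: inner_commute)
  show ?thesis unfolding wnorm_def 2 using nn by simp
qed

theorem lemma16:
  fixes Ssa :: "'s::finite \<Rightarrow> 'a::finite \<Rightarrow> 's set"
    and phi :: "'s \<Rightarrow> 'a \<Rightarrow> 's \<Rightarrow> real^'d"
    and theta_star :: "real^'d"
    and theta_hat :: "nat \<Rightarrow> real^'d"
    and Sig :: "nat \<Rightarrow> real^'d^'d"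
    and beta :: "nat \<Rightarrow> real"
    and L_theta :: real and T t :: nat
  assumes reach_ne: "\<And>s a. Ssa s a \<noteq> {}"
    and t_range: "t \<in> {1..T}"
    and Sigma_pd: "pos_def_mat (Sig t)"
    and beta_pos: "beta t > 0"
    and theta_bound: "norm theta_star \<le> L_theta"
    and conf: "wnorm (theta_hat t - theta_star) (Sig t) \<le> beta t"
  shows "mnl_prob Ssa phi theta_star \<in> conf_set Ssa phi (theta_hat t) (Sig t) (beta t)"
proof -
  have fin: "finite (Ssa s a)" for s a by simp
  have Zpos: "0 < (\<Sum>j\<in>Ssa s a. exp (phi s a j \<bullet> th))" for s a th
    using reach_ne[of s a] by (intro sum_pos) auto
  have bnd: "0 \<le> mnl_prob Ssa phi th s a s' \<and> mnl_prob Ssa phi th s a s' \<le> 1" for th s a s'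
  proof (cases "s' \<in> Ssa s a")
    case True
    have "exp (phi s a s' \<bullet> th) \<le> (\<Sum>j\<in>Ssa s a. exp (phi s a j \<bullet> th))"
      using True by (intro member_le_sum) auto
    thus ?thesis using True Zpos[of s a th] by (simp add: mnl_prob_def divide_simps)
  qed (simp add: mnl_prob_def)
  have sum1: "(\<Sum>s'\<in>Ssa s a. mnl_prob Ssa phi th s a s') = 1" for th s a
  proof -
    have "(\<Sum>s'\<in>Ssa s a. mnl_prob Ssa phi th s a s')
        = (\<Sum>s'\<in>Ssa s a. exp (phi s a s' \<bullet> th) / (\<Sum>j\<in>Ssa s a. exp (phi s a j \<bullet> th)))"
      by (intro sum.cong) (simp_all add: mnl_prob_def)
    also have "\<dots> = (\<Sum>s'\<in>Ssa s a. exp (phi s a s' \<bullet> th)) / (\<Sum>j\<in>Ssa s a. exp (phi s a j \<bullet> th))"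
      by (rule sum_divide_distrib[symmetric])
    finally have "(\<Sum>s'\<in>Ssa s a. mnl_prob Ssa phi th s a s')
        = (\<Sum>s'\<in>Ssa s a. exp (phi s a s' \<bullet> th)) / (\<Sum>j\<in>Ssa s a. exp (phi s a j \<bullet> th))" .
    thus ?thesis using Zpos[of s a th] by simp
  qed
  have l1: "(\<Sum>s'\<in>Ssa s a. \<bar>mnl_prob Ssa phi theta_star s a s' - mnl_prob Ssa phi (theta_hat t) s a s'\<bar>)
      \<le> conf_radius Ssa phi (Sig t) (beta t) s a" for s a
  proof -
    define M where "M = beta t * Max ((\<lambda>s'. wnorm (phi s a s') (matrix_inv (Sig t))) ` Ssa s a)"
    have close: "\<bar>phi s a i \<bullet> theta_star - phi s a i \<bullet> theta_hat t\<bar> \<le> M" if i: "i \<in> Ssa s a" for i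
    proof -
      have "\<bar>phi s a i \<bullet> theta_star - phi s a i \<bullet> theta_hat t\<bar> = \<bar>phi s a i \<bullet> (theta_hat t - theta_star)\<bar>"
        by (simp add: inner_diff_right)
      also have "\<dots> \<le> wnorm (phi s a i) (matrix_inv (Sig t)) * wnorm (theta_hat t - theta_star) (Sig t)"
        by (rule cs_wnorm[OF Sigma_pd])
      also have "\<dots> \<le> Max ((\<lambda>s'. wnorm (phi s a s') (matrix_inv (Sig t))) ` Ssa s a) * beta t"
      proof (rule mult_mono)
        show "wnorm (phi s a i) (matrix_inv (Sig t)) \<le> Max ((\<lambda>s'. wnorm (phi s a s') (matrix_inv (Sig t))) ` Ssa s a)"
          using i by (intro Max_ge) auto
        show "wnorm (theta_hat t - theta_star) (Sig t) \<le> beta t" by (rule conf)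
        show "0 \<le> wnorm (theta_hat t - theta_star) (Sig t)"
          unfolding wnorm_def using Sigma_pd unfolding pos_def_mat_def
          by (metis less_eq_real_def real_sqrt_ge_zero inner_zero_left matrix_vector_mult_0_right)
        have "0 \<le> wnorm (phi s a i) (matrix_inv (Sig t))" by (rule wnorm_inv_nonneg[OF Sigma_pd])
        also have "\<dots> \<le> Max ((\<lambda>s'. wnorm (phi s a s') (matrix_inv (Sig t))) ` Ssa s a)"
          using i by (intro Max_ge) auto
        finally show "0 \<le> Max ((\<lambda>s'. wnorm (phi s a s') (matrix_inv (Sig t))) ` Ssa s a)" .
      qed
      finally show ?thesis by (simp add: M_def mult.commute)
    qed
    obtain i0 where "i0 \<in> Ssa s a" using reach_ne[of s a] by blast
    hence M0: "0 \<le> M" using close[of i0] by linarith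
    have "(\<Sum>s'\<in>Ssa s a. \<bar>mnl_prob Ssa phi theta_star s a s' - mnl_prob Ssa phi (theta_hat t) s a s'\<bar>)
       = (\<Sum>i\<in>Ssa s a. \<bar>exp (phi s a i \<bullet> theta_star) / (\<Sum>j\<in>Ssa s a. exp (phi s a j \<bullet> theta_star))
            - exp (phi s a i \<bullet> theta_hat t) / (\<Sum>j\<in>Ssa s a. exp (phi s a j \<bullet> theta_hat t))\<bar>)"
      by (intro sum.cong) (auto simp: mnl_prob_def)
    also have "\<dots> \<le> 2 * M"
      by (rule softmax_l1[OF fin reach_ne M0 close])
    finally show ?thesis by (simp add: conf_radius_def M_def)
  qed
  show ?thesis unfolding conf_set_def using bnd sum1 l1 by blast
qed

end
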